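(* Let $X$ be a complex Banach space, $J:X\to X^*$ a duality section, and $x\in X$ a unit vector such that for every unit vector $y\neq x$ one has $\|x+y\|<2$. If $T=\{e^{tA}:t\ge 0\}$ is a $(C_0)$ contraction semigroup with generator $A$ and $\lim_{t\to\infty}|\langle T(t)x,J(x)\rangle|=1$, then $x$ is in the domain of $A$ and $Ax=i\lambda x$ for some real $\lambda$.
   Context: For a complex Banach space $X$, a functional $x^*\in X^*$ is called dual to $x\in X$ if $\langle x,x^*\rangle = \|x^*\|\|x\| = \|x^*\|^2=\|x\|^2$. A map $J:X\to X^*$ is a duality section if $J(x)$ is dual to $x$ for every $x\in X$. *)

theory Defs
  imports "HOL-Analysis.Analysis"
begin

class complex_vector = real_vector +
  fixes scaleC :: "complex \<Rightarrow> 'a \<Rightarrow> 'a" (infixr "*\<^sub>C" 75)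
  assumes scaleC_add_right: "a *\<^sub>C (x + y) = a *\<^sub>C x + a *\<^sub>C y"
    and scaleC_add_left: "(a + b) *\<^sub>C x = a *\<^sub>C x + b *\<^sub>C x"
    and scaleC_scaleC: "a *\<^sub>C (b *\<^sub>C x) = (a * b) *\<^sub>C x"
    and scaleC_one: "1 *\<^sub>C x = x"
    and scaleR_scaleC: "r *\<^sub>R x = complex_of_real r *\<^sub>C x"

class complex_normed_vector = complex_vector + real_normed_vector +
  assumes norm_scaleC: "norm (a *\<^sub>C x) = cmod a * norm x"

instantiation complex :: complex_normed_vector
begin
definition scaleC_complex_def: "scaleC a (x::complex) = a * x"
instance
  by standard (auto simp: scaleC_complex_def algebra_simps scaleR_conv_of_real norm_mult)
end

text \<open>Bounded complex-linear maps; the dual space consists of the bounded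
  complex-linear functionals X \<Rightarrow> complex, normed by the operator norm onorm.\<close>

definition bounded_clinear ::
  "('a::complex_normed_vector \<Rightarrow> 'b::complex_normed_vector) \<Rightarrow> bool" where
  "bounded_clinear f \<longleftrightarrow>
     (\<forall>x y. f (x + y) = f x + f y) \<and>
     (\<forall>c x. f (c *\<^sub>C x) = c *\<^sub>C f x) \<and>
     (\<exists>K. \<forall>x. norm (f x) \<le> norm x * K)"

definition dual_to :: "('a::complex_normed_vector \<Rightarrow> complex) \<Rightarrow> 'a \<Rightarrow> bool" where
  "dual_to xs x \<longleftrightarrow>
     bounded_clinear xs \<and>
     xs x = complex_of_real (onorm xs * norm x) \<and>
     onorm xs * norm x = (onorm xs)\<^sup>2 \<and>
     (onorm xs)\<^sup>2 = (norm x)\<^sup>2"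

definition duality_section :: "('a::complex_normed_vector \<Rightarrow> ('a \<Rightarrow> complex)) \<Rightarrow> bool" where
  "duality_section J \<longleftrightarrow> (\<forall>x. dual_to (J x) x)"

text \<open>(C_0) contraction semigroup, indexed by t \<ge> 0 (values at t < 0 irrelevant).\<close>

definition C0_contraction_semigroup ::
  "(real \<Rightarrow> 'a::complex_normed_vector \<Rightarrow> 'a) \<Rightarrow> bool" where
  "C0_contraction_semigroup T \<longleftrightarrow>
     (\<forall>t\<ge>0. bounded_clinear (T t)) \<and>
     T 0 = id \<and>
     (\<forall>s\<ge>0. \<forall>t\<ge>0. T (s + t) = T s \<circ> T t) \<and>
     (\<forall>x. ((\<lambda>t. T t x) \<longlongrightarrow> x) (at_right 0)) \<and>
     (\<forall>t\<ge>0. onorm (T t) \<le> 1)"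

text \<open>Generator: x \<in> D(A) and A x = y iff (T h x - x)/h \<rightarrow> y as h \<rightarrow> 0+.\<close>

definition generator_at :: "(real \<Rightarrow> 'a::complex_normed_vector \<Rightarrow> 'a) \<Rightarrow> 'a \<Rightarrow> 'a \<Rightarrow> bool" where
  "generator_at T x y \<longleftrightarrow> ((\<lambda>h. (1 / h) *\<^sub>R (T h x - x)) \<longlongrightarrow> y) (at_right 0)"

end

theory Submission
  imports Defs
begin


lemma scal_unif:
  fixes u :: "real \<Rightarrow> complex"
  assumes mod1: "\<And>s. s \<ge> 0 \<Longrightarrow> cmod (u s) = 1"
    and mult: "\<And>s t. s \<ge> 0 \<Longrightarrow> t \<ge> 0 \<Longrightarrow> u (s + t) = u s * u t"
    and u0: "u 0 = 1"
    and lim: "(u \<longlongrightarrow> 1) (at_right 0)"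
    and e: "e > 0"
  shows "\<exists>d>0. \<forall>s t. s \<ge> 0 \<longrightarrow> t \<ge> 0 \<longrightarrow> \<bar>s - t\<bar> < d \<longrightarrow> cmod (u s - u t) < e"
proof -
  have diff: "cmod (u s - u t) = cmod (u (s - t) - 1)" if "0 \<le> t" "t \<le> s" for s t
  proof -
    have "u s = u t * u (s - t)" using mult[of t "s - t"] that by simp
    hence "u s - u t = u t * (u (s - t) - 1)" by (simp add: algebra_simps)
    thus ?thesis using mod1[of t] that by (simp add: norm_mult)
  qed
  have "eventually (\<lambda>h. dist (u h) 1 < e) (at_right 0)"
    using lim e by (simp add: tendsto_iff)
  then obtain d where d: "d > 0" "\<And>h. h > 0 \<Longrightarrow> h < d \<Longrightarrow> dist (u h) 1 < e"
    unfolding eventually_at_right_to_0 eventually_at_filter eventually_nhds_metric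
    by (force simp: dist_real_def)
  show ?thesis
  proof (intro exI[of _ d] conjI allI impI)
    fix s t :: real assume st: "s \<ge> 0" "t \<ge> 0" "\<bar>s - t\<bar> < d"
    have key: "cmod (u h - 1) < e" if "0 \<le> h" "h < d" for h
    proof (cases "h = 0")
      case True thus ?thesis using u0 e by simp
    next
      case False thus ?thesis using d(2)[of h] that by (simp add: dist_norm)
    qed
    show "cmod (u s - u t) < e"
    proof (cases "t \<le> s")
      case True thus ?thesis using diff[of t s] key[of "s - t"] st by simp
    next
      case False
      hence "cmod (u s - u t) = cmod (u t - u s)" by (simp add: norm_minus_commute)
      thus ?thesis using diff[of s t] key[of "t - s"] st False by simp
    qed
  qed (fact d)
qed

lemma scal_deriv:
  fixes u :: "real \<Rightarrow> complex"
  assumes mod1: "\<And>s. s \<ge> 0 \<Longrightarrow> cmod (u s) = 1"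
    and mult: "\<And>s t. s \<ge> 0 \<Longrightarrow> t \<ge> 0 \<Longrightarrow> u (s + t) = u s * u t"
    and u0: "u 0 = 1"
    and lim: "(u \<longlongrightarrow> 1) (at_right 0)"
  shows "\<exists>\<mu>. Re \<mu> = 0 \<and> ((\<lambda>h. (u h - 1) / of_real h) \<longlongrightarrow> \<mu>) (at_right 0)"
proof -
  have unif: "\<exists>d>0. \<forall>s t. s \<ge> 0 \<longrightarrow> t \<ge> 0 \<longrightarrow> \<bar>s - t\<bar> < d \<longrightarrow> cmod (u s - u t) < e"
    if "e > 0" for e
    by (rule scal_unif[of u e]) (use mod1 mult u0 lim that in auto)
  have cont: "continuous_on {0..} u"
    unfolding continuous_on_iff
  proof (intro ballI allI impI)
    fix t e :: real assume "t \<in> {0..}" "e > 0"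
    obtain d where "d > 0" and d: "\<forall>s t. s \<ge> 0 \<longrightarrow> t \<ge> 0 \<longrightarrow> \<bar>s - t\<bar> < d \<longrightarrow> cmod (u s - u t) < e"
      using unif[of e] \<open>e > 0\<close> by blast
    thus "\<exists>d>0. \<forall>x'\<in>{0..}. dist x' t < d \<longrightarrow> dist (u x') (u t) < e"
      using \<open>t \<in> {0..}\<close> by (auto simp: dist_norm intro!: exI[of _ d])
  qed
  have contab: "continuous_on {a..b} u" if "0 \<le> a" for a b
    using cont that by (auto intro: continuous_on_subset)
  have intab: "u integrable_on {a..b}" if "0 \<le> a" for a b
    using contab[OF that] by (rule integrable_continuous_real)
  have approx: "\<exists>d>0. \<forall>a h. a \<ge> 0 \<longrightarrow> 0 \<le> h \<longrightarrow> h < d \<longrightarrow>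
      cmod (integral {a..a+h} u - of_real h * u a) \<le> h * e" if epos: "e > 0" for e
  proof -
    obtain d where "d > 0" and d: "\<forall>s t. s \<ge> 0 \<longrightarrow> t \<ge> 0 \<longrightarrow> \<bar>s - t\<bar> < d \<longrightarrow> cmod (u s - u t) < e"
      using unif[OF epos] by blast
    show ?thesis
    proof (intro exI[of _ d] conjI allI impI)
      fix a h :: real assume ah: "a \<ge> 0" "0 \<le> h" "h < d"
      have "integral {a..a+h} (\<lambda>s. u s - u a) = integral {a..a+h} u - integral {a..a+h} (\<lambda>s. u a)"
        by (rule integral_diff) (auto intro: intab ah)
      also have "integral {a..a+h} (\<lambda>s. u a) = of_real h * u a"
        using ah by (simp add: scaleR_conv_of_real)
      finally have eq: "integral {a..a+h} u - of_real h * u a = integral {a..a+h} (\<lambda>s. u s - u a)" by simp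
      have "norm (integral {a..a+h} (\<lambda>s. u s - u a)) \<le> e * (a + h - a)"
      proof (rule integral_bound)
        show "continuous_on {a..a+h} (\<lambda>s. u s - u a)"
          using contab[OF ah(1)] by (intro continuous_intros)
        fix t assume "t \<in> {a..a+h}"
        thus "norm (u t - u a) \<le> e" using d ah by (auto intro!: less_imp_le)
      qed (use ah in simp)
      thus "cmod (integral {a..a+h} u - of_real h * u a) \<le> h * e" using eq by (simp add: mult.commute)
    qed (fact \<open>d > 0\<close>)
  qed
  have shift: "integral {h..h+\<delta>} u = u h * integral {0..\<delta>} u" if "h \<ge> 0" "\<delta> \<ge> 0" for h \<delta>
  proof -
    have "integral {0..\<delta>} (u \<circ> (+) h) = integral {0+h..\<delta>+h} u" by (rule integral_shift_Icc_real)
    moreover have "integral {0..\<delta>} (u \<circ> (+) h) = integral {0..\<delta>} (\<lambda>s. u h * u s)"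
      by (rule integral_cong) (use that mult in auto)
    ultimately show ?thesis by (simp add: add.commute)
  qed
  obtain d0 where "d0 > 0" and d0: "\<forall>a h. a \<ge> 0 \<longrightarrow> 0 \<le> h \<longrightarrow> h < d0 \<longrightarrow>
      cmod (integral {a..a+h} u - of_real h * u a) \<le> h * (1/2)"
    using approx[of "1/2"] by auto
  define \<delta> where "\<delta> = d0 / 2"
  have \<delta>: "\<delta> > 0" "\<delta> < d0" using \<open>d0 > 0\<close> by (auto simp: \<delta>_def)
  define c where "c = integral {0..\<delta>} u"
  have "cmod (c - of_real \<delta>) \<le> \<delta> * (1/2)" using d0[rule_format, of 0 \<delta>] \<delta> u0 by (simp add: c_def)
  hence "c \<noteq> 0" using \<delta> by auto
  have ident: "(u h - 1) * c = integral {\<delta>..\<delta>+h} u - integral {0..h} u" if "h \<ge> 0" for h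
  proof -
    have "integral {0..h} u + integral {h..h+\<delta>} u = integral {0..h+\<delta>} u"
      by (rule Henstock_Kurzweil_Integration.integral_combine) (use that \<delta> intab in auto)
    moreover have "integral {0..\<delta>} u + integral {\<delta>..\<delta>+h} u = integral {0..\<delta>+h} u"
      by (rule Henstock_Kurzweil_Integration.integral_combine) (use that \<delta> intab in auto)
    ultimately show ?thesis using shift[OF that, of \<delta>] \<delta> by (simp add: c_def algebra_simps)
  qed
  define \<mu> where "\<mu> = (u \<delta> - 1) / c"
  define q where "q = (\<lambda>h. (u h - 1) / complex_of_real h)"
  have lim_q: "(q \<longlongrightarrow> \<mu>) (at_right 0)"
    unfolding tendsto_iff
  proof (intro allI impI)
    fix e :: real assume "e > 0"
    define e' where "e' = e * cmod c / 4"
    have "e' > 0" using \<open>e > 0\<close> \<open>c \<noteq> 0\<close> by (simp add: e'_def)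
    then obtain d where "d > 0" and d: "\<forall>a h. a \<ge> 0 \<longrightarrow> 0 \<le> h \<longrightarrow> h < d \<longrightarrow>
      cmod (integral {a..a+h} u - of_real h * u a) \<le> h * e'"
      using approx by blast
    show "eventually (\<lambda>h. dist (q h) \<mu> < e) (at_right 0)"
      using eventually_at_right_real[OF \<open>d > 0\<close>]
    proof eventually_elim
      case (elim h)
      hence h: "0 < h" "h < d" by auto
      have A: "cmod (integral {\<delta>..\<delta>+h} u - of_real h * u \<delta>) \<le> h * e'" using d h \<delta> by auto
      have B: "cmod (integral {0..h} u - of_real h) \<le> h * e'" using d[rule_format, of 0 h] h u0 by auto
      have "(u h - 1) * c - of_real h * (u \<delta> - 1) =
          (integral {\<delta>..\<delta>+h} u - of_real h * u \<delta>) - (integral {0..h} u - of_real h)"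
        using ident[of h] h by (simp add: algebra_simps)
      also have "cmod \<dots> \<le> 2 * h * e'" using norm_triangle_ineq4[of "integral {\<delta>..\<delta>+h} u - of_real h * u \<delta>" "integral {0..h} u - of_real h"] A B
        by linarith
      finally have C: "cmod ((u h - 1) * c - of_real h * (u \<delta> - 1)) \<le> 2 * h * e'" .
      have "q h - \<mu> = ((u h - 1) * c - of_real h * (u \<delta> - 1)) / (of_real h * c)"
        using h \<open>c \<noteq> 0\<close> by (simp add: q_def \<mu>_def field_simps)
      hence "cmod (q h - \<mu>) = cmod ((u h - 1) * c - of_real h * (u \<delta> - 1)) / (h * cmod c)"
        using h by (simp add: norm_divide norm_mult)
      also have "\<dots> \<le> 2 * h * e' / (h * cmod c)"
        using C h \<open>c \<noteq> 0\<close> by (intro divide_right_mono) auto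
      also have "\<dots> = e / 2" using h \<open>c \<noteq> 0\<close> by (simp add: e'_def)
      finally show ?case using \<open>e > 0\<close> by (simp add: dist_norm)
    qed
  qed
  have reeq: "Re (q h) = - h * (cmod (q h))\<^sup>2 / 2" if "h > 0" for h
  proof -
    have w: "(Re (u h))\<^sup>2 + (Im (u h))\<^sup>2 = 1"
      using mod1[of h] that by (metis cmod_power2 one_power2 less_imp_le)
    have "Re (q h) = (Re (u h) - 1) / h" by (simp add: q_def Re_divide_of_real)
    moreover have "(cmod (q h))\<^sup>2 = ((Re (u h) - 1)\<^sup>2 + (Im (u h))\<^sup>2) / h\<^sup>2"
      by (simp add: q_def norm_divide power_divide cmod_power2)
    moreover have "(Re (u h) - 1)\<^sup>2 + (Im (u h))\<^sup>2 = 2 - 2 * Re (u h)"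
      using w by (simp add: power2_eq_square algebra_simps)
    ultimately have a: "Re (u h) = 1 + h * Re (q h)" and b: "Re (u h) * 2 + h * (h * (cmod (q h))\<^sup>2) = 2"
      using that by (simp_all add: field_simps power2_eq_square)
    have "h * (Re (q h) * 2 + h * (cmod (q h))\<^sup>2) = 0"
      using a b by (simp add: algebra_simps)
    hence "Re (q h) * 2 + h * (cmod (q h))\<^sup>2 = 0" using that by simp
    thus ?thesis by simp
  qed
  have l1: "((\<lambda>h. Re (q h)) \<longlongrightarrow> Re \<mu>) (at_right 0)" by (intro tendsto_intros lim_q)
  have l2: "((\<lambda>h. - h * (cmod (q h))\<^sup>2 / 2) \<longlongrightarrow> - 0 * (cmod \<mu>)\<^sup>2 / 2) (at_right 0)"
    by (intro tendsto_intros lim_q) (simp add: tendsto_ident_at)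
  have ev: "eventually (\<lambda>h. - h * (cmod (q h))\<^sup>2 / 2 = Re (q h)) (at_right 0)"
    using eventually_at_right_real[OF zero_less_one] by eventually_elim (simp add: reeq)
  have l3: "((\<lambda>h. Re (q h)) \<longlongrightarrow> 0) (at_right 0)"
    using Lim_transform_eventually[OF l2 ev] by simp
  have "Re \<mu> = 0"
    by (rule tendsto_unique[OF trivial_limit_at_right_real l1 l3])
  thus ?thesis using lim_q unfolding q_def by blast
qed



lemma scaleC_decomp:
  fixes y :: "'a::complex_vector"
  shows "c *\<^sub>C y = Re c *\<^sub>R y + Im c *\<^sub>R (\<i> *\<^sub>C y)"
proof -
  have "c = complex_of_real (Re c) + complex_of_real (Im c) * \<i>" by (simp add: complex_eq_iff)
  hence "c *\<^sub>C y = complex_of_real (Re c) *\<^sub>C y + (complex_of_real (Im c) * \<i>) *\<^sub>C y"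
    by (metis scaleC_add_left)
  thus ?thesis by (simp add: scaleR_scaleC scaleC_scaleC)
qed

lemma scaleC_diff_left:
  fixes y :: "'a::complex_vector"
  shows "(a - b) *\<^sub>C y = a *\<^sub>C y - b *\<^sub>C y"
  using scaleC_add_left[of "a - b" b y] by (simp add: eq_diff_eq)

lemma scaleC_inj:
  fixes x :: "'a::complex_normed_vector"
  assumes "x \<noteq> 0" "c *\<^sub>C x = d *\<^sub>C x"
  shows "c = d"
proof -
  have "norm ((c - d) *\<^sub>C x) = 0" using assms by (simp add: scaleC_diff_left)
  thus ?thesis using assms(1) by (simp add: norm_scaleC)
qed

lemma clin_lin:
  assumes "bounded_clinear (f :: 'a::complex_normed_vector \<Rightarrow> 'b::complex_normed_vector)"
  shows "bounded_linear f"
proof -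
  obtain K where K: "\<And>x. norm (f x) \<le> norm x * K" using assms unfolding bounded_clinear_def by blast
  show ?thesis
  proof (rule bounded_linear_intro[OF _ _ K])
    show "f (x + y) = f x + f y" for x y using assms unfolding bounded_clinear_def by blast
    show "f (r *\<^sub>R x) = r *\<^sub>R f x" for r x
      using assms unfolding bounded_clinear_def by (simp add: scaleR_scaleC)
  qed
qed

lemma clin_bound:
  assumes "bounded_clinear (f :: 'a::complex_normed_vector \<Rightarrow> 'b::complex_normed_vector)"
    and "onorm f \<le> 1"
  shows "norm (f z) \<le> norm z"
proof -
  have "norm (f z) \<le> onorm f * norm z" by (rule onorm[OF clin_lin[OF assms(1)]])
  also have "\<dots> \<le> 1 * norm z" by (rule mult_right_mono) (use assms in auto)
  finally show ?thesis by simp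
qed

lemma phase_align:
  fixes a b :: complex
  assumes "a \<noteq> 0" "b \<noteq> 0"
  defines "c \<equiv> a * cnj b / of_real (cmod a * cmod b)"
  shows "cmod c = 1 \<and> cmod (a + c * b) = cmod a + cmod b"
proof
  show "cmod c = 1" using assms by (simp add: c_def norm_divide norm_mult)
  have "cnj b * b = of_real ((cmod b)\<^sup>2)" using complex_norm_square[of b] by (simp add: mult.commute)
  hence "c * b = a * of_real (cmod b / cmod a)"
    using assms by (simp add: c_def field_simps power2_eq_square)
  hence "a + c * b = a * of_real (1 + cmod b / cmod a)" by (simp add: algebra_simps)
  hence "cmod (a + c * b) = cmod a * (1 + cmod b / cmod a)"
    by (simp only: norm_mult norm_of_real) (simp add: abs_of_nonneg)
  moreover have "cmod a * (1 + cmod b / cmod a) = cmod a + cmod b" using assms(1) by (simp add: field_simps)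
  ultimately show "cmod (a + c * b) = cmod a + cmod b" by linarith
qed



theorem mainTheorem3:
  fixes J :: "'a::{complex_normed_vector, banach} \<Rightarrow> ('a \<Rightarrow> complex)"
    and T :: "real \<Rightarrow> 'a \<Rightarrow> 'a"
    and x :: 'a
  assumes "duality_section J"
    and "norm x = 1"
    and "\<forall>y. norm y = 1 \<and> y \<noteq> x \<longrightarrow> norm (x + y) < 2"
    and "C0_contraction_semigroup T"
    and "((\<lambda>t. cmod (J x (T t x))) \<longlongrightarrow> 1) at_top"
  shows "\<exists>l::real. generator_at T x ((\<i> * complex_of_real l) *\<^sub>C x)"
proof -
  note nx = assms(2)
  note strict = assms(3)
  note limJ = assms(5)
  define \<phi> where "\<phi> = J x"
  have dual: "dual_to \<phi> x" using assms(1) unfolding duality_section_def \<phi>_def by blast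
  have \<phi>lin: "bounded_clinear \<phi>" using dual unfolding dual_to_def by blast
  have on1: "onorm \<phi> = 1"
  proof -
    have "(onorm \<phi>)\<^sup>2 = 1" using dual nx unfolding dual_to_def by simp
    moreover have "onorm \<phi> \<ge> 0" using dual nx unfolding dual_to_def by (metis mult_1_right zero_le_power2)
    ultimately show ?thesis by (simp add: power2_eq_1_iff)
  qed
  have \<phi>b: "cmod (\<phi> z) \<le> norm z" for z by (rule clin_bound[OF \<phi>lin]) (simp add: on1)
  have Tlin: "bounded_clinear (T t)" if "t \<ge> 0" for t using assms(4) that unfolding C0_contraction_semigroup_def by blast
  have Tb: "norm (T t z) \<le> norm z" if "t \<ge> 0" for t z
    by (rule clin_bound[OF Tlin[OF that]]) (use assms(4) that in \<open>auto simp: C0_contraction_semigroup_def\<close>)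
  have T0: "T 0 = id" using assms(4) unfolding C0_contraction_semigroup_def by blast
  have Tadd: "T (s + t) = T s \<circ> T t" if "s \<ge> 0" "t \<ge> 0" for s t
    using assms(4) that unfolding C0_contraction_semigroup_def by blast
  have Tlim: "((\<lambda>t. T t x) \<longlongrightarrow> x) (at_right 0)" using assms(4) unfolding C0_contraction_semigroup_def by blast
  have Tadd_x: "T t (a + b) = T t a + T t b" if "t \<ge> 0" for t a b
    using Tlin[OF that] unfolding bounded_clinear_def by blast
  have Tscale: "T t (c *\<^sub>C a) = c *\<^sub>C T t a" if "t \<ge> 0" for t c a
    using Tlin[OF that] unfolding bounded_clinear_def by blast
  have \<phi>add: "\<phi> (a + b) = \<phi> a + \<phi> b" for a b using \<phi>lin unfolding bounded_clinear_def by blast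
  have \<phi>scale: "\<phi> (c *\<^sub>C a) = c * \<phi> a" for c a using \<phi>lin unfolding bounded_clinear_def by (simp add: scaleC_complex_def)
  have x0: "x \<noteq> 0" using nx by auto

  have phase: "\<exists>c. cmod c = 1 \<and> T s x = c *\<^sub>C x" if s0: "s \<ge> 0" for s
  proof -
    define y where "y = T s x"
    have ny: "norm y \<le> 1" using Tb[OF s0, of x] nx by (simp add: y_def)
    define g where "g = (\<lambda>c. norm (x + c *\<^sub>C y))"
    have geq: "g = (\<lambda>c. norm (x + (Re c *\<^sub>R y + Im c *\<^sub>R (\<i> *\<^sub>C y))))"
      unfolding g_def by (rule ext, subst scaleC_decomp, rule refl)
    have gcont: "continuous_on (sphere 0 1) g"
      unfolding geq by (intro continuous_intros)
    obtain c0 where c0: "c0 \<in> sphere 0 1" and c0max: "\<And>c. c \<in> sphere 0 1 \<Longrightarrow> g c \<le> g c0"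
      using continuous_attains_sup[OF compact_sphere _ gcont] by (metis empty_iff mem_sphere_0 norm_one)
    have "g c0 \<ge> 2"
    proof (rule ccontr)
      assume "\<not> g c0 \<ge> 2"
      hence lt: "g c0 < 2" by simp
      define a where "a = (\<lambda>t. \<phi> (T t x))"
      define b where "b = (\<lambda>t. \<phi> (T t y))"
      have la: "((\<lambda>t. cmod (a t)) \<longlongrightarrow> 1) at_top" using limJ by (simp add: a_def \<phi>_def)
      have sh: "filterlim (\<lambda>t. s + t) at_top at_top"
        by (rule filterlim_tendsto_add_at_top[OF tendsto_const filterlim_ident])
      have "((\<lambda>t. cmod (a (s + t))) \<longlongrightarrow> 1) at_top"
        using filterlim_compose[OF la sh] by (simp add: o_def)
      moreover have "eventually (\<lambda>t. cmod (a (s + t)) = cmod (b t)) at_top"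
        using eventually_ge_at_top[of 0]
      proof eventually_elim
        case (elim t) thus ?case using Tadd[OF elim s0] by (simp add: a_def b_def y_def add.commute)
      qed
      ultimately have lb: "((\<lambda>t. cmod (b t)) \<longlongrightarrow> 1) at_top" by (rule Lim_transform_eventually)
      have "((\<lambda>t. cmod (a t) + cmod (b t)) \<longlongrightarrow> 1 + 1) at_top" by (intro tendsto_intros la lb)
      hence e1: "eventually (\<lambda>t. cmod (a t) + cmod (b t) > g c0) at_top"
        using lt by (intro order_tendstoD) auto
      have e2: "eventually (\<lambda>t. cmod (a t) > 1/2) at_top" using la by (intro order_tendstoD) auto
      have e3: "eventually (\<lambda>t. cmod (b t) > 1/2) at_top" using lb by (intro order_tendstoD) auto
      obtain t where t: "t \<ge> 0" "cmod (a t) + cmod (b t) > g c0" "cmod (a t) > 1/2" "cmod (b t) > 1/2"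
        using eventually_happens'[OF trivial_limit_at_top_linorder, OF eventually_conj[OF eventually_ge_at_top[of 0] eventually_conj[OF e1 eventually_conj[OF e2 e3]]]]
        by blast
      have an: "a t \<noteq> 0" "b t \<noteq> 0" using t by auto
      define c where "c = a t * cnj (b t) / of_real (cmod (a t) * cmod (b t))"
      have pc: "cmod c = 1 \<and> cmod (a t + c * b t) = cmod (a t) + cmod (b t)"
        using phase_align[OF an] unfolding c_def by blast
      have "\<phi> (T t (x + c *\<^sub>C y)) = a t + c * b t"
        using t(1) by (simp add: Tadd_x Tscale \<phi>add \<phi>scale a_def b_def)
      hence "cmod (a t) + cmod (b t) \<le> norm (T t (x + c *\<^sub>C y))" using pc \<phi>b by metis
      also have "\<dots> \<le> g c" unfolding g_def by (rule Tb[OF t(1)])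
      also have "\<dots> \<le> g c0" using pc by (intro c0max) simp
      finally show False using t(2) by simp
    qed
    have nc0: "cmod c0 = 1" using c0 by simp
    have "g c0 \<le> norm x + norm (c0 *\<^sub>C y)" unfolding g_def by (rule norm_triangle_ineq)
    hence "2 \<le> 1 + norm y" using \<open>g c0 \<ge> 2\<close> nx nc0 by (simp add: norm_scaleC)
    hence nyy: "norm y = 1" using ny by simp
    have "norm (c0 *\<^sub>C y) = 1" using nyy nc0 by (simp add: norm_scaleC)
    moreover have "\<not> norm (x + c0 *\<^sub>C y) < 2" using \<open>g c0 \<ge> 2\<close> by (simp add: g_def)
    ultimately have eq: "c0 *\<^sub>C y = x" using strict by blast
    have "cnj c0 * c0 = 1" using nc0 by (metis complex_norm_square mult.commute of_real_1 one_power2)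
    hence "cnj c0 *\<^sub>C x = y" using eq by (metis scaleC_scaleC scaleC_one)
    thus ?thesis using nc0 by (intro exI[of _ "cnj c0"]) (simp add: y_def)
  qed
  define u where "u = (\<lambda>s. SOME c. cmod c = 1 \<and> T s x = c *\<^sub>C x)"
  have u: "cmod (u s) = 1 \<and> T s x = u s *\<^sub>C x" if "s \<ge> 0" for s
    unfolding u_def by (rule someI_ex[OF phase[OF that]])
  have u0: "u 0 = 1"
  proof -
    have "u 0 *\<^sub>C x = 1 *\<^sub>C x" using u[of 0] T0 by (simp add: scaleC_one)
    thus ?thesis using scaleC_inj[OF x0] by blast
  qed
  have umult: "u (s + t) = u s * u t" if "s \<ge> 0" "t \<ge> 0" for s t
  proof -
    have "u (s + t) *\<^sub>C x = T (s + t) x" using u[of "s + t"] that by simp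
    also have "\<dots> = T s (T t x)" using Tadd[OF that] by simp
    also have "\<dots> = (u s * u t) *\<^sub>C x" using u[OF that(1)] u[OF that(2)] Tscale[OF that(1)]
      by (simp add: scaleC_scaleC mult.commute)
    finally show ?thesis using scaleC_inj[OF x0] by blast
  qed
  have ulim: "(u \<longlongrightarrow> 1) (at_right 0)"
    unfolding tendsto_iff
  proof (intro allI impI)
    fix e :: real assume "e > 0"
    hence "eventually (\<lambda>h. dist (T h x) x < e) (at_right 0)" using Tlim by (simp add: tendsto_iff)
    thus "eventually (\<lambda>h. dist (u h) 1 < e) (at_right 0)"
      using eventually_at_right_real[OF zero_less_one]
    proof eventually_elim
      case (elim h)
      hence "T h x - x = (u h - 1) *\<^sub>C x" using u[of h] by (simp add: scaleC_diff_left scaleC_one)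
      thus ?case using elim nx by (simp add: dist_norm norm_scaleC)
    qed
  qed
  obtain \<mu> where \<mu>: "Re \<mu> = 0" "((\<lambda>h. (u h - 1) / of_real h) \<longlongrightarrow> \<mu>) (at_right 0)"
    using scal_deriv[of u] u umult u0 ulim by blast
  have mu_eq: "\<mu> = \<i> * complex_of_real (Im \<mu>)" using \<mu>(1) by (simp add: complex_eq_iff)
  have l1: "((\<lambda>h. ((u h - 1) / of_real h) *\<^sub>C x) \<longlongrightarrow> \<mu> *\<^sub>C x) (at_right 0)"
  proof -
    have e: "(\<lambda>h. ((u h - 1) / of_real h) *\<^sub>C x) = (\<lambda>h. Re ((u h - 1) / of_real h) *\<^sub>R x + Im ((u h - 1) / of_real h) *\<^sub>R (\<i> *\<^sub>C x))"
      by (rule ext, subst scaleC_decomp, rule refl)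
    have "\<mu> *\<^sub>C x = Re \<mu> *\<^sub>R x + Im \<mu> *\<^sub>R (\<i> *\<^sub>C x)" by (subst scaleC_decomp, rule refl)
    thus ?thesis unfolding e by (simp only:) (intro tendsto_intros \<mu>(2))
  qed
  have ev: "eventually (\<lambda>h. ((u h - 1) / of_real h) *\<^sub>C x = (1 / h) *\<^sub>R (T h x - x)) (at_right 0)"
    using eventually_at_right_real[OF zero_less_one]
  proof eventually_elim
    case (elim h)
    hence "T h x - x = (u h - 1) *\<^sub>C x" using u[of h] by (simp add: scaleC_diff_left scaleC_one)
    thus ?case by (simp add: scaleR_scaleC scaleC_scaleC divide_inverse mult.commute)
  qed
  have "generator_at T x (\<mu> *\<^sub>C x)"
    unfolding generator_at_def using Lim_transform_eventually[OF l1 ev] .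
  thus ?thesis using mu_eq by metis
qed

end
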